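(* Let $\alpha,\beta$ be real numbers with $\alpha>\beta-1>0$, and set $a=\frac{\alpha-\beta+1}{2}$, \[ I(\alpha,\beta)=\int_{-\infty}^{\infty}\frac{|\sin t|^{\alpha}}{|t|^{\beta}}\,dt,\qquad \phi(\alpha,\beta)=\frac{\alpha^{a}\,\Gamma(\alpha+1)}{\Gamma(a+\alpha+1)}, \] where $\Gamma$ is the gamma function. Then \[ \left(\frac{6}{\alpha}\right)^{a}\Gamma(a)\,\phi(\alpha,\beta)\;\le\; I(\alpha,\beta)\;\le\;\left(\frac{6}{\alpha}\right)^{a}\Gamma(a)\left\{1+\frac{1}{\beta-1}\right\}. \] In particular, if $\beta=\alpha>1$, then \[ \sqrt{\frac{6}{\alpha}}\,\frac{\sqrt{\alpha}\,\Gamma(\alpha+1)}{\Gamma(\alpha+\frac32)}\sqrt{\pi}\;\le\; I(\alpha,\alpha)\;\le\;\sqrt{\frac{6}{\alpha}}\,\sqrt{\pi}\left\{1+\frac{1}{\alpha-1}\right\}. \] *)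

theory Defs
  imports "HOL-Analysis.Analysis"
begin

definition sinInt :: "real \<Rightarrow> real \<Rightarrow> real" where
  "sinInt \<alpha> \<beta> = (LINT t|lborel. \<bar>sin t\<bar> powr \<alpha> / \<bar>t\<bar> powr \<beta>)"

definition phiAB :: "real \<Rightarrow> real \<Rightarrow> real" where
  "phiAB \<alpha> \<beta> = (let a = (\<alpha> - \<beta> + 1) / 2 in
     \<alpha> powr a * Gamma (\<alpha> + 1) / Gamma (a + \<alpha> + 1))"

end

theory Submission
  imports Defs "HOL-Real_Asymp.Real_Asymp"
begin



lemma sin_minus_xcos_nonneg:
  fixes s :: real assumes "0 \<le> s" "s \<le> pi" shows "0 \<le> sin s - s * cos s"
proof -
  have "(\<lambda>x. sin x - x * cos x) 0 \<le> (\<lambda>x. sin x - x * cos x) s"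
  proof (rule deriv_nonneg_imp_mono[where g = "(\<lambda>x. sin x - x * cos x)" and g' = "\<lambda>x. x * sin x"])
    fix x assume "x \<in> {0..s}"
    show "((\<lambda>x. sin x - x * cos x) has_real_derivative x * sin x) (at x)"
      by (auto intro!: derivative_eq_intros)
    from \<open>x \<in> {0..s}\<close> assms show "0 \<le> x * sin x" by (intro mult_nonneg_nonneg sin_ge_zero) auto
  qed (use assms in auto)
  thus ?thesis by simp
qed

lemma h_nonneg:
  fixes s :: real assumes "0 \<le> s" "s \<le> pi" shows "0 \<le> sin s - s^2 * sin s / 3 - s * cos s"
proof -
  have "(\<lambda>x. sin x - x^2 * sin x / 3 - x * cos x) 0 \<le> (\<lambda>x. sin x - x^2 * sin x / 3 - x * cos x) s"
  proof (rule deriv_nonneg_imp_mono[where g = "(\<lambda>x. sin x - x^2 * sin x / 3 - x * cos x)" and g' = "\<lambda>x. x / 3 * (sin x - x * cos x)"])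
    fix x assume "x \<in> {0..s}"
    show "((\<lambda>x. sin x - x^2 * sin x / 3 - x * cos x) has_real_derivative x / 3 * (sin x - x * cos x)) (at x)"
      by (rule derivative_eq_intros refl | simp)+ (simp add: algebra_simps power2_eq_square)
    from \<open>x \<in> {0..s}\<close> assms show "0 \<le> x / 3 * (sin x - x * cos x)"
      by (auto intro!: mult_nonneg_nonneg sin_minus_xcos_nonneg)
  qed (use assms in auto)
  thus ?thesis by simp
qed

lemma R_le_1:
  fixes s :: real assumes "0 \<le> s" "s \<le> pi" shows "exp (s^2/6) * (cos s + s / 3 * sin s) \<le> 1"
proof -
  have "- ((\<lambda>x. exp (x^2/6) * (cos x + x / 3 * sin x)) 0) \<le> - ((\<lambda>x. exp (x^2/6) * (cos x + x / 3 * sin x)) s)"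
  proof (rule deriv_nonneg_imp_mono[where g = "\<lambda>x. - (exp (x^2/6) * (cos x + x / 3 * sin x))" and g' = "\<lambda>x. exp (x^2/6) / 9 * (6 * (sin x - x^2 * sin x / 3 - x * cos x) + x^2 * sin x)"])
    fix x assume "x \<in> {0..s}"
    show "((\<lambda>x. - (exp (x^2/6) * (cos x + x / 3 * sin x))) has_real_derivative
       exp (x^2/6) / 9 * (6 * (sin x - x^2 * sin x / 3 - x * cos x) + x^2 * sin x)) (at x)"
      by (rule derivative_eq_intros refl | simp)+ (simp add: algebra_simps power2_eq_square)
    from \<open>x \<in> {0..s}\<close> assms show "0 \<le> exp (x^2/6) / 9 * (6 * (sin x - x^2 * sin x / 3 - x * cos x) + x^2 * sin x)"
      using h_nonneg[of x] sin_ge_zero[of x] assms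
      by (intro mult_nonneg_nonneg add_nonneg_nonneg) auto
  qed (use assms in auto)
  thus ?thesis by simp
qed

lemma sin_le_exp:
  fixes s :: real assumes "0 \<le> s" "s \<le> pi" shows "sin s \<le> s * exp (-(s^2)/6)"
proof -
  have "(\<lambda>x. x - sin x * exp (x^2/6)) 0 \<le> (\<lambda>x. x - sin x * exp (x^2/6)) s"
  proof (rule deriv_nonneg_imp_mono[where g = "(\<lambda>x. x - sin x * exp (x^2/6))" and g' = "\<lambda>x. 1 - exp (x^2/6) * (cos x + x / 3 * sin x)"])
    fix x assume "x \<in> {0..s}"
    show "((\<lambda>x. x - sin x * exp (x^2/6)) has_real_derivative 1 - exp (x^2/6) * (cos x + x / 3 * sin x)) (at x)"
      by (rule derivative_eq_intros refl | simp)+ (simp add: algebra_simps power2_eq_square)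
    from \<open>x \<in> {0..s}\<close> assms show "0 \<le> 1 - exp (x^2/6) * (cos x + x / 3 * sin x)"
      using R_le_1[of x] by auto
  qed (use assms in auto)
  hence "sin s * exp (s^2/6) \<le> s" by simp
  hence "sin s * exp (s^2/6) * exp (-(s^2)/6) \<le> s * exp (-(s^2)/6)" by (intro mult_right_mono) auto
  thus ?thesis by (simp add: mult.assoc flip: exp_add)
qed

lemma sin_ge_cubic:
  fixes t :: real assumes "0 \<le> t" shows "t - t^3/6 \<le> sin t"
proof -
  have c: "1 - x^2/2 \<le> cos x" for x :: real
  proof -
    have "(\<lambda>x. cos x - 1 + x^2/2) 0 \<le> (\<lambda>x. cos x - 1 + x^2/2) \<bar>x\<bar>"
    proof (rule deriv_nonneg_imp_mono[where g = "(\<lambda>x. cos x - 1 + x^2/2)" and g' = "\<lambda>x. x - sin x"])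
      fix y assume "y \<in> {0..\<bar>x\<bar>}"
      show "((\<lambda>x. cos x - 1 + x^2/2) has_real_derivative y - sin y) (at y)"
        by (auto intro!: derivative_eq_intros)
      show "0 \<le> y - sin y" using sin_x_le_x[of y] \<open>y \<in> {0..\<bar>x\<bar>}\<close> by auto
    qed auto
    thus ?thesis by simp
  qed
  have "(\<lambda>x. sin x - x + x^3/6) 0 \<le> (\<lambda>x. sin x - x + x^3/6) t"
  proof (rule deriv_nonneg_imp_mono[where g = "(\<lambda>x. sin x - x + x^3/6)" and g' = "\<lambda>x. cos x - 1 + x^2/2"])
    fix y assume "y \<in> {0..t}"
    show "((\<lambda>x. sin x - x + x^3/6) has_real_derivative cos y - 1 + y^2/2) (at y)"
      by (auto intro!: derivative_eq_intros simp: power2_eq_square)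
    show "0 \<le> cos y - 1 + y^2/2" using c[of y] by auto
  qed (use assms in auto)
  thus ?thesis by simp
qed




lemma key_step:
  fixes b n :: real assumes "b > 1" "n \<ge> 1"
  shows "(b - 1) * (n + 1) powr (-b) + (n + 1) powr (1 - b) \<le> n powr (1 - b)"
proof -
  have n1: "n + 1 > 0" "n > 0" using assms by auto
  have l: "ln (n / (n+1)) \<le> n / (n+1) - 1" using n1 by (intro ln_le_minus_one) auto
  have "n / (n+1) - 1 = - 1 / (n+1)" using n1 by (simp add: field_simps)
  with l have "(1 - b) * ln (n / (n+1)) \<ge> (1 - b) * (- 1 / (n+1))"
    using assms by (intro mult_left_mono_neg) auto
  moreover have "(1 - b) * (- 1 / (n+1)) = (b-1)/(n+1)" using n1 by (simp add: field_simps)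
  ultimately have "(1 - b) * ln (n / (n+1)) \<ge> (b - 1) / (n+1)" by simp
  hence "exp ((1 - b) * ln (n / (n+1))) \<ge> 1 + (b - 1) / (n+1)"
    using exp_ge_add_one_self[of "(1 - b) * ln (n / (n+1))"] by linarith
  hence e: "(n / (n+1)) powr (1 - b) \<ge> 1 + (b - 1) / (n+1)"
    using n1 by (simp add: powr_def)
  have "(1 + (b - 1) / (n+1)) * (n+1) powr (1-b) \<le> (n / (n+1)) powr (1 - b) * (n+1) powr (1-b)"
    by (rule mult_right_mono[OF e]) simp
  also have "\<dots> = n powr (1-b)" using n1 by (simp add: powr_divide)
  finally have "n powr (1-b) \<ge> (1 + (b - 1) / (n+1)) * (n+1) powr (1-b)" .
  also have "(1 + (b - 1) / (n+1)) * (n+1) powr (1-b) = (n+1) powr (1-b) + (b-1) * ((n+1) powr (1-b) / (n+1))"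
    by (simp add: field_simps)
  also have "(n+1) powr (1-b) / (n+1) = (n+1) powr (-b)"
  proof -
    have "(n+1) powr (-b) = (n+1) powr ((1-b) - 1)" by simp
    also have "\<dots> = (n+1) powr (1-b) / (n+1) powr 1" by (rule powr_diff)
    finally show ?thesis using n1 by simp
  qed
  finally show ?thesis by simp
qed

lemma partial_bound:
  fixes b :: real assumes "b > 1" "n \<ge> 1"
  shows "(\<Sum>k<n. (real k + 1) powr (-b)) \<le> b / (b - 1) - real n powr (1 - b) / (b - 1)"
  using assms(2)
proof (induction n rule: dec_induct)
  case base
  have "b / (b - 1) - 1 / (b - 1) = 1" using assms by (simp add: diff_divide_distrib[symmetric])
  then show ?case by simp
next
  case (step n)
  have "(\<Sum>k<Suc n. (real k + 1) powr (-b)) = (\<Sum>k<n. (real k + 1) powr (-b)) + (real n + 1) powr (-b)"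
    by simp
  also have "\<dots> \<le> b / (b - 1) - real n powr (1 - b) / (b - 1) + (real n + 1) powr (-b)"
    using step by simp
  also have "\<dots> \<le> b / (b - 1) - real (Suc n) powr (1 - b) / (b - 1)"
  proof -
    have "(b - 1) * (real n + 1) powr (-b) + (real n + 1) powr (1 - b) \<le> real n powr (1 - b)"
      using key_step[of b "real n"] assms step by auto
    hence "(real n + 1) powr (-b) \<le> (real n powr (1 - b) - (real n + 1) powr (1 - b)) / (b - 1)"
      using assms by (simp add: field_simps)
    thus ?thesis by (simp add: field_simps diff_divide_distrib add.commute)
  qed
  finally show ?case .
qed

lemma zeta_bound:
  fixes b :: real assumes "b > 1"
  shows "(\<Sum>k. ennreal ((real k + 1) powr (-b))) \<le> ennreal (b / (b - 1))"
proof -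
  have pb: "(\<Sum>k<n. (real k + 1) powr (-b)) \<le> b / (b - 1)" for n
  proof (cases "n \<ge> 1")
    case True
    have "real n powr (1 - b) / (b - 1) \<ge> 0" using assms by auto
    with partial_bound[OF assms True] show ?thesis by linarith
  next
    case False
    then have "n = 0" by simp
    then show ?thesis using assms by simp
  qed
  have s: "summable (\<lambda>k. (real k + 1) powr (-b))"
    by (rule summableI_nonneg_bounded[OF _ pb]) auto
  have "(\<Sum>k. ennreal ((real k + 1) powr (-b))) = ennreal (\<Sum>k. (real k + 1) powr (-b))"
    by (rule suminf_ennreal_eq) (use s in \<open>auto simp: summable_sums\<close>)
  also have "\<dots> \<le> ennreal (b / (b - 1))"
    by (intro ennreal_leI suminf_le_const[OF s pb])
  finally show ?thesis .
qed



lemma einterval_0_inf: "einterval 0 \<infinity> = {0::real<..}"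
  by (simp add: zero_ereal_def)

lemma nn_set_integral:
  fixes f :: "real \<Rightarrow> real"
  assumes "set_integrable lborel A f" "\<And>x. x \<in> A \<Longrightarrow> 0 \<le> f x"
  shows "(\<integral>\<^sup>+x. ennreal (indicator A x * f x) \<partial>lborel) = ennreal (set_lebesgue_integral lborel A f)"
proof -
  have "integrable lborel (\<lambda>x. indicator A x * f x)"
    using assms(1) by (simp add: set_integrable_def)
  moreover have "AE x in lborel. 0 \<le> indicator A x * f x"
    using assms(2) by (auto simp: indicator_def)
  ultimately show ?thesis
    by (simp add: nn_integral_eq_integral set_lebesgue_integral_def)
qed

lemma fg_aux: fixes a c u :: real assumes u: "u > 0" and c: "c > 0" and a: "a > 0"
  shows "(\<lambda>s. s powr (2*a-1) * exp (-(c*(s^2)))) (sqrt (u/c)) * (inverse (sqrt (u/c)) / (2*c)) = u powr (a-1) * exp (-u) / (2 * c powr a)"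
  proof -
    define g where "g = sqrt (u/c)"
    have g0: "g > 0" using u c by (simp add: g_def)
    have g2: "g^2 = u/c" using u c by (simp add: g_def)
    have A: "g powr (2*a-1) * inverse g = g powr ((2*a-1) - 1)"
      by (simp only: powr_diff) (use g0 in \<open>simp add: divide_inverse\<close>)
    have B: "g powr ((2*a-1) - 1) = (g powr 2) powr (a-1)"
      by (simp add: powr_powr algebra_simps)
    have B2: "g powr 2 = u/c" using g0 g2 by (simp add: powr_numeral)
    have C: "(u/c) powr (a-1) = u powr (a-1) / c powr (a-1)" using u c by (simp add: powr_divide)
    have D: "c powr (a-1) = c powr a / c" using c by (simp add: powr_diff)
    have 1: "g powr (2*a-1) * inverse g = u powr (a-1) * c / c powr a"
      using c by (simp only: A B B2 C D) simp
    have 2: "c * g^2 = u" using u c g2 by simp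
    have "(\<lambda>s. s powr (2*a-1) * exp (-(c*(s^2)))) g * (inverse g / (2*c)) = (g powr (2*a-1) * inverse g) * exp (-(c*g^2)) / (2*c)"
      by simp
    also have "\<dots> = u powr (a-1) * exp (-u) / (2 * c powr a)" using c by (simp only: 1 2) simp
    finally show ?thesis unfolding g_def .
  qed

lemma gamma_type:
  fixes a c :: real assumes a: "a > 0" and c: "c > 0"
  shows "(\<integral>\<^sup>+s. ennreal (indicator {0<..} s * (s powr (2*a-1) * exp (-(c*(s^2))))) \<partial>lborel)
         = ennreal (Gamma a / (2 * c powr a))"
proof -
  define f where "f s = s powr (2*a-1) * exp (-(c*(s^2)))" for s :: real
  define g where "g u = sqrt (u/c)" for u :: real
  define g' where "g' u = inverse (sqrt (u/c)) / (2*c)" for u :: real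
  define h where "h u = u powr (a-1) * exp (-u) / (2 * c powr a)" for u :: real
  have fg: "f (g u) * g' u = h u" if u: "u > 0" for u
    unfolding f_def g_def g'_def h_def using fg_aux[OF u c a] by simp
  have hmeas: "h \<in> borel_measurable borel" unfolding h_def by measurable
  have fmeas: "f \<in> borel_measurable borel" unfolding f_def by measurable
  have nnh: "(\<integral>\<^sup>+u. ennreal (indicator {0<..} u * h u) \<partial>lborel) = ennreal (Gamma a / (2 * c powr a))"
  proof -
    have "(\<integral>\<^sup>+u. ennreal (indicator {0<..} u * h u) \<partial>lborel)
        = (\<integral>\<^sup>+u. ennreal (indicator {0..} u * u powr (a - 1) / exp u) * ennreal (1 / (2 * c powr a)) \<partial>lborel)"
      by (intro nn_integral_cong) (auto simp: h_def indicator_def exp_minus field_simps simp flip: ennreal_mult)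
    also have "\<dots> = ennreal (Gamma a) * ennreal (1 / (2 * c powr a))"
      apply (subst nn_integral_multc)
       apply measurable
      apply (simp add: Gamma_conv_nn_integral_real[OF a])
      done
    also have "\<dots> = ennreal (Gamma a / (2 * c powr a))"
      using a c by (simp flip: ennreal_mult)
    finally show ?thesis .
  qed
  have "integrable lborel (\<lambda>x. indicator {0<..} x * h x)"
    by (rule integrableI_nn_integral_finite[OF _ _ nnh]) (auto simp: h_def indicator_def intro: hmeas)
  hence hint: "set_integrable lborel {0<..} h"
    unfolding set_integrable_def by simp
  have ih: "set_integrable lborel (einterval 0 \<infinity>) (\<lambda>u. f (g u) * g' u)"
    unfolding einterval_0_inf using hint by (subst set_integrable_cong[OF refl refl fg]) auto
  have lim0: "((ereal \<circ> g \<circ> real_of_ereal) \<longlongrightarrow> 0) (at_right 0)"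
  proof -
    have "(g \<longlongrightarrow> sqrt (0/c)) (at_right 0)" unfolding g_def
      using c by (intro tendsto_intros) auto
    thus ?thesis using c by (simp add: ereal_tendsto_simps zero_ereal_def)
  qed
  have liminf: "((ereal \<circ> g \<circ> real_of_ereal) \<longlongrightarrow> \<infinity>) (at_left \<infinity>)"
  proof -
    have "filterlim g at_top at_top" unfolding g_def using c by real_asymp
    thus ?thesis by (simp add: ereal_tendsto_simps)
  qed
  have S: "set_integrable lborel (einterval 0 \<infinity>) f"
          "(LBINT x=0..\<infinity>. f x) = (LBINT x=0..\<infinity>. f (g x) * g' x)"
  proof -
    note th = interval_integral_substitution_nonneg[where a=0 and b="\<infinity>" and g=g and g'=g' and f=f and A=0 and B="\<infinity>"]
    have d: "DERIV g x :> g' x" if "0 < x" for x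
      unfolding g_def g'_def using that c
      by (auto intro!: derivative_eq_intros simp: field_simps)
    have cg': "isCont g' x" if "0 < x" for x
      unfolding g'_def using that c by (auto intro!: continuous_intros)
    have cf: "isCont f (g x)" if "0 < x" for x
    proof -
      have "g x > 0" using that c by (simp add: g_def)
      thus ?thesis unfolding f_def by (auto intro!: continuous_intros)
    qed
    have fnn: "0 \<le> f (g x)" for x unfolding f_def by simp
    have g'nn: "0 \<le> g' x" if "0 \<le> x" for x unfolding g'_def using that c by simp
    show "set_integrable lborel (einterval 0 \<infinity>) f"
         "(LBINT x=0..\<infinity>. f x) = (LBINT x=0..\<infinity>. f (g x) * g' x)"
      using th[OF _ d cf cg' fnn g'nn lim0 liminf ih] by (auto simp: zero_ereal_def)
  qed
  have "(\<integral>\<^sup>+s. ennreal (indicator {0<..} s * f s) \<partial>lborel) = ennreal (set_lebesgue_integral lborel {0<..} f)"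
    by (intro nn_set_integral[OF S(1)[unfolded einterval_0_inf]]) (simp add: f_def)
  also have "set_lebesgue_integral lborel {0<..} f = (LBINT x=0..\<infinity>. f x)"
    by (simp add: interval_lebesgue_integral_def einterval_0_inf)
  also have "\<dots> = (LBINT x=0..\<infinity>. f (g x) * g' x)" by (rule S(2))
  also have "\<dots> = set_lebesgue_integral lborel {0<..} h"
    by (simp add: interval_lebesgue_integral_def einterval_0_inf)
       (rule set_lebesgue_integral_cong, auto simp: fg)
  also have "ennreal \<dots> = (\<integral>\<^sup>+u. ennreal (indicator {0<..} u * h u) \<partial>lborel)"
    using hint by (intro nn_set_integral[symmetric]) (auto simp: h_def)
  also note nnh
  finally show ?thesis by (simp add: f_def)
qed



lemma fg_aux2: fixes a b u :: real assumes u: "u > 0" "u < 1"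
  shows "(\<lambda>t. t powr (2*a-1) * (1 - t^2/6) powr (b-1)) (sqrt (6*u)) * (3 * inverse (sqrt (6*u)))
       = 6 powr a / 2 * (u powr (a-1) * (1-u) powr (b-1))"
proof -
  define g where "g = sqrt (6*u)"
  have g0: "g > 0" using u by (simp add: g_def)
  have g2: "g^2 = 6*u" using u by (simp add: g_def)
  have A: "g powr (2*a-1) * inverse g = g powr ((2*a-1) - 1)"
    by (simp only: powr_diff) (use g0 in \<open>simp add: divide_inverse\<close>)
  have B: "g powr ((2*a-1) - 1) = (g powr 2) powr (a-1)"
    by (simp add: powr_powr algebra_simps)
  have B2: "g powr 2 = 6*u" using g0 g2 by (simp add: powr_numeral)
  have C: "(6*u) powr (a-1) = 6 powr (a-1) * u powr (a-1)" using u by (simp add: powr_mult)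
  have D: "6 powr (a-1) = 6 powr a / (6::real)" by (simp add: powr_diff)
  have 1: "g powr (2*a-1) * inverse g = 6 powr a / 6 * u powr (a-1)"
    by (simp only: A B B2 C D)
  have 2: "1 - g^2/6 = 1 - u" using g2 by simp
  have "(\<lambda>t. t powr (2*a-1) * (1 - t^2/6) powr (b-1)) g * (3 * inverse g)
      = 3 * (g powr (2*a-1) * inverse g) * (1 - g^2/6) powr (b-1)" by simp
  also have "\<dots> = 6 powr a / 2 * (u powr (a-1) * (1-u) powr (b-1))"
    by (simp only: 1 2)
  finally show ?thesis unfolding g_def .
qed

lemma beta_type:
  fixes a b :: real assumes a: "a > 0" and b: "b > 0"
  shows "(\<integral>\<^sup>+t. ennreal (indicator {0<..<sqrt 6} t * (t powr (2*a-1) * (1 - t^2/6) powr (b-1))) \<partial>lborel)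
         = ennreal (6 powr a * Beta a b / 2)"
proof -
  define f where "f t = t powr (2*a-1) * (1 - t^2/6) powr (b-1)" for t :: real
  define g where "g u = sqrt (6*u)" for u :: real
  define g' where "g' u = 3 * inverse (sqrt (6*u))" for u :: real
  define h where "h u = 6 powr a / 2 * (u powr (a-1) * (1-u) powr (b-1))" for u :: real
  have fg: "f (g u) * g' u = h u" if u: "u \<in> {0<..<1}" for u
    unfolding f_def g_def g'_def h_def using fg_aux2[of u a b] u by simp
  have hmeas: "h \<in> borel_measurable borel" unfolding h_def by measurable
  have nnB: "(\<integral>\<^sup>+u. ennreal (indicator {0<..<1} u * (u powr (a-1) * (1-u) powr (b-1))) \<partial>lborel) = ennreal (Beta a b)"
  proof -
    have "(\<integral>\<^sup>+u. ennreal (indicator {0<..<1} u * (u powr (a-1) * (1-u) powr (b-1))) \<partial>lborel)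
        = (\<integral>\<^sup>+u. ennreal (indicator {0..1} u * (u powr (a-1) * (1-u) powr (b-1))) \<partial>lborel)"
      by (intro nn_integral_cong) (auto simp: indicator_def)
    also have "\<dots> = ennreal (Beta a b)"
      by (rule nn_integral_has_integral_lebesgue[OF _ has_integral_Beta_real[OF a b]]) auto
    finally show ?thesis .
  qed
  have nnh: "(\<integral>\<^sup>+u. ennreal (indicator {0<..<1} u * h u) \<partial>lborel) = ennreal (6 powr a * Beta a b / 2)"
  proof -
    have "(\<integral>\<^sup>+u. ennreal (indicator {0<..<1} u * h u) \<partial>lborel)
        = (\<integral>\<^sup>+u. ennreal (6 powr a / 2) * ennreal (indicator {0<..<1} u * (u powr (a-1) * (1-u) powr (b-1))) \<partial>lborel)"
      by (intro nn_integral_cong) (auto simp: h_def indicator_def simp flip: ennreal_mult)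
    also have "\<dots> = ennreal (6 powr a / 2) * ennreal (Beta a b)"
      apply (subst nn_integral_cmult)
       apply measurable
      apply (simp add: nnB)
      done
    also have "\<dots> = ennreal (6 powr a * Beta a b / 2)"
    proof -
      have Bp: "Beta a b \<ge> 0" using a b by (simp add: Beta_def Gamma_real_pos less_imp_le)
      show ?thesis by (subst ennreal_mult[symmetric]) (use Bp in auto)
    qed
    finally show ?thesis .
  qed
  have "integrable lborel (\<lambda>x. indicator {0<..<1} x * h x)"
    by (rule integrableI_nn_integral_finite[OF _ _ nnh]) (auto simp: h_def indicator_def intro: hmeas)
  hence hint: "set_integrable lborel {0<..<1} h"
    unfolding set_integrable_def by simp
  have e01: "einterval 0 1 = {0::real<..<1}" by (simp add: zero_ereal_def one_ereal_def)
  have e06: "einterval 0 (ereal (sqrt 6)) = {0::real<..<sqrt 6}" by (simp add: zero_ereal_def)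
  have ih: "set_integrable lborel (einterval 0 1) (\<lambda>u. f (g u) * g' u)"
    unfolding e01 using hint by (subst set_integrable_cong[OF refl refl fg]) auto
  have lim0: "((ereal \<circ> g \<circ> real_of_ereal) \<longlongrightarrow> 0) (at_right 0)"
  proof -
    have "(g \<longlongrightarrow> sqrt (6*0)) (at_right 0)" unfolding g_def
      by (intro tendsto_intros)
    thus ?thesis by (simp add: ereal_tendsto_simps zero_ereal_def)
  qed
  have lim1: "((ereal \<circ> g \<circ> real_of_ereal) \<longlongrightarrow> ereal (sqrt 6)) (at_left 1)"
  proof -
    have "(g \<longlongrightarrow> sqrt (6*1)) (at_left 1)" unfolding g_def
      by (intro tendsto_intros)
    thus ?thesis by (simp add: ereal_tendsto_simps one_ereal_def)
  qed
  have S: "set_integrable lborel (einterval 0 (ereal (sqrt 6))) f"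
          "(LBINT x=0..ereal (sqrt 6). f x) = (LBINT x=0..1. f (g x) * g' x)"
  proof -
    note th = interval_integral_substitution_nonneg[where a=0 and b=1 and g=g and g'=g' and f=f and A=0 and B="ereal (sqrt 6)"]
    have d: "DERIV g x :> g' x" if "0 < ereal x" for x
    proof -
      have x: "x > 0" using that by (simp add: zero_ereal_def)
      show ?thesis unfolding g_def g'_def using x
        by (auto intro!: derivative_eq_intros simp: field_simps)
    qed
    have cg': "isCont g' x" if "0 < ereal x" for x
    proof -
      have x: "x > 0" using that by (simp add: zero_ereal_def)
      show ?thesis unfolding g'_def using x by (auto intro!: continuous_intros)
    qed
    have cf: "isCont f (g x)" if "0 < ereal x" "ereal x < 1" for x
    proof -
      have x: "x > 0" "x < 1" using that by (simp_all add: zero_ereal_def one_ereal_def)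
      have "g x > 0" using x by (simp add: g_def)
      moreover have "1 - (g x)^2/6 > 0" using x by (simp add: g_def)
      ultimately show ?thesis unfolding f_def by (auto intro!: continuous_intros)
    qed
    have fnn: "0 \<le> f (g x)" for x unfolding f_def by simp
    have g'nn: "0 \<le> g' x" if "0 \<le> ereal x" for x
    proof -
      have x: "x \<ge> 0" using that by (simp add: zero_ereal_def)
      show ?thesis unfolding g'_def using x by simp
    qed
    show "set_integrable lborel (einterval 0 (ereal (sqrt 6))) f"
         "(LBINT x=0..ereal (sqrt 6). f x) = (LBINT x=0..1. f (g x) * g' x)"
      using th[OF _ d cf cg' fnn g'nn lim0 lim1 ih] by (auto simp: zero_ereal_def)
  qed
  have "(\<integral>\<^sup>+s. ennreal (indicator {0<..<sqrt 6} s * f s) \<partial>lborel) = ennreal (set_lebesgue_integral lborel {0<..<sqrt 6} f)"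
    by (intro nn_set_integral[OF S(1)[unfolded e06]]) (simp add: f_def)
  also have "set_lebesgue_integral lborel {0<..<sqrt 6} f = (LBINT x=0..ereal (sqrt 6). f x)"
    by (simp add: interval_lebesgue_integral_def e06)
  also have "\<dots> = (LBINT x=0..1. f (g x) * g' x)" by (rule S(2))
  also have "\<dots> = set_lebesgue_integral lborel {0<..<1} h"
    by (simp add: interval_lebesgue_integral_def e01)
       (rule set_lebesgue_integral_cong, auto simp: fg)
  also have "ennreal \<dots> = (\<integral>\<^sup>+u. ennreal (indicator {0<..<1} u * h u) \<partial>lborel)"
    using hint by (intro nn_set_integral[symmetric]) (auto simp: h_def)
  also note nnh
  finally show ?thesis by (simp add: f_def)
qed



lemma F_meas: "(\<lambda>t::real. \<bar>sin t\<bar> powr al / \<bar>t\<bar> powr be) \<in> borel_measurable borel"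
  by measurable

lemma F_shift_le:
  fixes al be s :: real and k :: nat
  assumes al: "al > 0" and be: "be > 1" and s: "0 < s" "s \<le> pi"
  shows "\<bar>sin (real k * pi + s)\<bar> powr al / \<bar>real k * pi + s\<bar> powr be
         \<le> (real k + 1) powr (-be) * (\<bar>sin s\<bar> powr al / s powr be)"
proof -
  have sn: "\<bar>sin (real k * pi + s)\<bar> = \<bar>sin s\<bar>"
    by (simp add: sin_add abs_mult power_abs)
  have pos: "real k * pi + s > 0" using s by (simp add: add_nonneg_pos)
  have le: "(real k + 1) * s \<le> real k * pi + s"
    using s by (simp add: algebra_simps mult_right_mono)
  have "((real k + 1) * s) powr be \<le> (real k * pi + s) powr be"
    using le s be by (intro powr_mono2) auto
  hence d: "(real k + 1) powr be * s powr be \<le> \<bar>real k * pi + s\<bar> powr be"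
    using pos s by (simp add: powr_mult)
  have dp: "(real k + 1) powr be * s powr be > 0" using s by simp
  have "\<bar>sin (real k * pi + s)\<bar> powr al / \<bar>real k * pi + s\<bar> powr be
        \<le> \<bar>sin s\<bar> powr al / ((real k + 1) powr be * s powr be)"
    unfolding sn by (intro divide_left_mono d) (use dp pos in \<open>auto intro!: mult_pos_pos\<close>)
  also have "\<dots> = (real k + 1) powr (-be) * (\<bar>sin s\<bar> powr al / s powr be)"
    by (simp add: powr_minus divide_inverse)
  finally show ?thesis .
qed

lemma G_le:
  fixes al be s :: real
  assumes al: "al > 0" and s: "0 < s" "s \<le> pi"
  shows "\<bar>sin s\<bar> powr al / s powr be \<le> s powr (al - be) * exp (-((al/6)*(s^2)))"
proof -
  have s0: "sin s \<ge> 0" using s by (intro sin_ge_zero) auto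
  have "\<bar>sin s\<bar> powr al \<le> (s * exp (-(s^2)/6)) powr al"
    using s0 sin_le_exp[of s] s al by (intro powr_mono2) auto
  also have "\<dots> = s powr al * exp (-((al/6)*(s^2)))"
    using s by (simp add: powr_mult exp_powr_real algebra_simps)
  finally have "\<bar>sin s\<bar> powr al / s powr be \<le> s powr al * exp (-((al/6)*(s^2))) / s powr be"
    by (intro divide_right_mono) auto
  also have "\<dots> = s powr (al - be) * exp (-((al/6)*(s^2)))"
    using s by (simp add: powr_diff)
  finally show ?thesis .
qed

lemma low_le:
  fixes al be t :: real
  assumes al: "al > 0" and t: "0 < t" "t < sqrt 6"
  shows "t powr (al - be) * (1 - t^2/6) powr al \<le> \<bar>sin t\<bar> powr al / \<bar>t\<bar> powr be"
proof -
  have t2: "t^2 < 6" using t by (metis abs_of_pos real_sqrt_abs real_sqrt_less_iff real_sqrt_pow2 real_sqrt_power zero_less_numeral)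
  have p: "1 - t^2/6 > 0" using t2 by simp
  have "t * (1 - t^2/6) \<le> sin t" using sin_ge_cubic[of t] t by (simp add: algebra_simps power3_eq_cube power2_eq_square)
  moreover have "t * (1 - t^2/6) \<ge> 0" using p t by simp
  ultimately have "(t * (1 - t^2/6)) powr al \<le> \<bar>sin t\<bar> powr al"
    using al by (intro powr_mono2) auto
  hence "t powr al * (1 - t^2/6) powr al / t powr be \<le> \<bar>sin t\<bar> powr al / t powr be"
    using t p by (intro divide_right_mono) (auto simp: powr_mult)
  moreover have "t powr al * (1 - t^2/6) powr al / t powr be = t powr (al - be) * (1 - t^2/6) powr al"
    using t by (simp add: powr_diff)
  ultimately show ?thesis using t by simp
qed




lemma nn_sym:
  fixes al be :: real
  shows "(\<integral>\<^sup>+t. ennreal (\<bar>sin t\<bar> powr al / \<bar>t\<bar> powr be) \<partial>lborel)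
       = 2 * (\<integral>\<^sup>+t. ennreal (\<bar>sin t\<bar> powr al / \<bar>t\<bar> powr be) * indicator {0<..} t \<partial>lborel)"
proof -
  define F where "F t = \<bar>sin t\<bar> powr al / \<bar>t\<bar> powr be" for t :: real
  have Fm[measurable]: "F \<in> borel_measurable borel" unfolding F_def by (rule F_meas)
  have Fs: "F (-t) = F t" for t unfolding F_def by simp
  have "(\<integral>\<^sup>+t. ennreal (F t) \<partial>lborel)
      = (\<integral>\<^sup>+t. ennreal (F t) * indicator {0<..} t + ennreal (F t) * indicator {..<0} t \<partial>lborel)"
    by (intro nn_integral_cong) (auto simp: indicator_def F_def)
  also have "\<dots> = (\<integral>\<^sup>+t. ennreal (F t) * indicator {0<..} t \<partial>lborel) + (\<integral>\<^sup>+t. ennreal (F t) * indicator {..<0} t \<partial>lborel)"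
    by (rule nn_integral_add) measurable
  also have "(\<integral>\<^sup>+t. ennreal (F t) * indicator {..<0} t \<partial>lborel) = (\<integral>\<^sup>+t. ennreal (F t) * indicator {0<..} t \<partial>lborel)"
  proof -
    have "(\<integral>\<^sup>+t. ennreal (F t) * indicator {..<0} t \<partial>lborel)
        = ennreal \<bar>-1\<bar> * (\<integral>\<^sup>+t. ennreal (F (0 + -1 * t)) * indicator {..<0} (0 + -1 * t) \<partial>lborel)"
      by (rule nn_integral_real_affine) auto
    also have "\<dots> = (\<integral>\<^sup>+t. ennreal (F t) * indicator {0<..} t \<partial>lborel)"
      by (auto simp: Fs indicator_def intro!: nn_integral_cong)
    finally show ?thesis .
  qed
  finally show ?thesis unfolding F_def by (simp add: mult_2)
qed

lemma nn_lower:
  fixes al be :: real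
  assumes al: "al > 0" and be: "be > 1" and ab: "al > be - 1"
  shows "ennreal (6 powr ((al-be+1)/2) * Beta ((al-be+1)/2) (al+1) / 2)
       \<le> (\<integral>\<^sup>+t. ennreal (\<bar>sin t\<bar> powr al / \<bar>t\<bar> powr be) * indicator {0<..} t \<partial>lborel)"
proof -
  define a where "a = (al-be+1)/2"
  have a: "a > 0" using ab by (simp add: a_def)
  have e: "2*a-1 = al - be" by (simp add: a_def field_simps)
  have "ennreal (6 powr a * Beta a (al+1) / 2)
      = (\<integral>\<^sup>+t. ennreal (indicator {0<..<sqrt 6} t * (t powr (2*a-1) * (1 - t^2/6) powr ((al+1)-1))) \<partial>lborel)"
    using beta_type[of a "al+1"] a al by simp
  also have "\<dots> \<le> (\<integral>\<^sup>+t. ennreal (\<bar>sin t\<bar> powr al / \<bar>t\<bar> powr be) * indicator {0<..} t \<partial>lborel)"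
  proof (intro nn_integral_mono)
    fix t :: real
    show "ennreal (indicator {0<..<sqrt 6} t * (t powr (2*a-1) * (1 - t^2/6) powr ((al+1)-1)))
          \<le> ennreal (\<bar>sin t\<bar> powr al / \<bar>t\<bar> powr be) * indicator {0<..} t"
    proof (cases "t \<in> {0<..<sqrt 6}")
      case True
      then show ?thesis using low_le[OF al, of t be] by (auto simp: e indicator_def)
    next
      case False
      then show ?thesis by (simp add: indicator_def)
    qed
  qed
  finally show ?thesis unfolding a_def .
qed

lemma nn_upper:
  fixes al be :: real
  assumes al: "al > 0" and be: "be > 1" and ab: "al > be - 1"
  shows "(\<integral>\<^sup>+t. ennreal (\<bar>sin t\<bar> powr al / \<bar>t\<bar> powr be) * indicator {0<..} t \<partial>lborel)
       \<le> ennreal (be/(be-1)) * ennreal ((6/al) powr ((al-be+1)/2) * Gamma ((al-be+1)/2) / 2)"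
proof -
  define a where "a = (al-be+1)/2"
  have a: "a > 0" using ab by (simp add: a_def)
  have e: "2*a-1 = al - be" by (simp add: a_def field_simps)
  define F where "F t = \<bar>sin t\<bar> powr al / \<bar>t\<bar> powr be" for t :: real
  have Fm[measurable]: "F \<in> borel_measurable borel" unfolding F_def by (rule F_meas)
  define G where "G s = \<bar>sin s\<bar> powr al / s powr be" for s :: real
  define Q where "Q = (\<integral>\<^sup>+s. ennreal (G s) * indicator {0<..pi} s \<partial>lborel)"
  define B where "B k = {real k * pi <.. (real k + 1) * pi}" for k :: nat
  have Bm[measurable]: "B k \<in> sets lborel" for k unfolding B_def by simp
  have U: "(\<Union>k. B k) = {0<..}"
  proof (intro set_eqI iffI)
    fix t assume "t \<in> (\<Union>k. B k)"
    then obtain k where "t \<in> B k" by auto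
    thus "t \<in> {0<..}" unfolding B_def by (auto intro: le_less_trans[of 0 "real k * pi"])
  next
    fix t :: real assume t: "t \<in> {0<..}"
    define m where "m = \<lceil>t / pi\<rceil>"
    have m1: "m \<ge> 1" using t by (simp add: m_def)
    have "real_of_int (m - 1) < t / pi" "t / pi \<le> real_of_int m" unfolding m_def
      by linarith+
    hence "real_of_int (m - 1) * pi < t" "t \<le> real_of_int m * pi"
      by (simp_all add: field_simps)
    moreover have "real (nat (m - 1)) = real_of_int (m - 1)" using m1 by simp
    ultimately have "t \<in> B (nat (m - 1))" unfolding B_def using m1 by (auto simp: algebra_simps)
    thus "t \<in> (\<Union>k. B k)" by blast
  qed
  have disj: "disjoint_family B"
  proof (unfold disjoint_family_on_def, intro ballI impI)
    fix k l :: nat assume "k \<noteq> l"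
    show "B k \<inter> B l = {}"
    proof (cases "k < l")
      case True
      hence "(real k + 1) * pi \<le> real l * pi" by (intro mult_right_mono) auto
      thus ?thesis unfolding B_def by auto
    next
      case False
      with \<open>k \<noteq> l\<close> have "l < k" by simp
      hence "(real l + 1) * pi \<le> real k * pi" by (intro mult_right_mono) auto
      thus ?thesis unfolding B_def by auto
    qed
  qed
  have step1: "(\<integral>\<^sup>+t. ennreal (F t) * indicator {0<..} t \<partial>lborel) = (\<Sum>k. \<integral>\<^sup>+t. ennreal (F t) * indicator (B k) t \<partial>lborel)"
    using nn_integral_disjoint_family[of "\<lambda>t. ennreal (F t)" lborel B, OF _ Bm disj] by (simp add: U)
  have step2: "(\<integral>\<^sup>+t. ennreal (F t) * indicator (B k) t \<partial>lborel) \<le> ennreal ((real k + 1) powr (-be)) * Q" for k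
  proof -
    have "(\<integral>\<^sup>+t. ennreal (F t) * indicator (B k) t \<partial>lborel)
        = ennreal \<bar>1\<bar> * (\<integral>\<^sup>+s. ennreal (F (real k * pi + 1 * s)) * indicator (B k) (real k * pi + 1 * s) \<partial>lborel)"
      by (rule nn_integral_real_affine) auto
    also have "\<dots> \<le> (\<integral>\<^sup>+s. ennreal ((real k + 1) powr (-be)) * (ennreal (G s) * indicator {0<..pi} s) \<partial>lborel)"
    proof (simp, intro nn_integral_mono)
      fix s :: real
      show "ennreal (F (real k * pi + s)) * indicator (B k) (real k * pi + s)
            \<le> ennreal ((real k + 1) powr (-be)) * (ennreal (G s) * indicator {0<..pi} s)"
      proof (cases "s \<in> {0<..pi}")
        case True
        hence "real k * pi + s \<in> B k" unfolding B_def by (auto simp: algebra_simps)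
        moreover have "F (real k * pi + s) \<le> (real k + 1) powr (-be) * G s"
          using F_shift_le[OF al be, of s k] True unfolding F_def G_def by auto
        ultimately show ?thesis using True
          by (auto simp: indicator_def G_def simp flip: ennreal_mult intro!: ennreal_leI)
      next
        case False
        hence "real k * pi + s \<notin> B k" unfolding B_def by (auto simp: algebra_simps)
        thus ?thesis by (simp add: indicator_def)
      qed
    qed
    also have "\<dots> = ennreal ((real k + 1) powr (-be)) * Q"
      unfolding Q_def G_def by (rule nn_integral_cmult) measurable
    finally show ?thesis .
  qed
  have step3: "(\<integral>\<^sup>+t. ennreal (F t) * indicator {0<..} t \<partial>lborel) \<le> ennreal (be/(be-1)) * Q"
  proof -
    have "(\<integral>\<^sup>+t. ennreal (F t) * indicator {0<..} t \<partial>lborel) \<le> (\<Sum>k. ennreal ((real k + 1) powr (-be)) * Q)"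
      unfolding step1 by (intro suminf_le step2) auto
    also have "\<dots> = (\<Sum>k. ennreal ((real k + 1) powr (-be))) * Q" by simp
    also have "\<dots> \<le> ennreal (be/(be-1)) * Q"
      by (intro mult_right_mono zeta_bound be) auto
    finally show ?thesis .
  qed
  have step4: "Q \<le> ennreal ((6/al) powr a * Gamma a / 2)"
  proof -
    have "Q \<le> (\<integral>\<^sup>+s. ennreal (indicator {0<..} s * (s powr (2*a-1) * exp (-((al/6)*(s^2))))) \<partial>lborel)"
      unfolding Q_def
    proof (intro nn_integral_mono)
      fix s :: real
      show "ennreal (G s) * indicator {0<..pi} s \<le> ennreal (indicator {0<..} s * (s powr (2*a-1) * exp (-((al/6)*(s^2)))))"
      proof (cases "s \<in> {0<..pi}")
        case True
        then show ?thesis using G_le[OF al, of s be] unfolding G_def e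
          by (auto simp: indicator_def intro!: ennreal_leI)
      next
        case False
        then show ?thesis by (auto simp: indicator_def)
      qed
    qed
    also have "\<dots> = ennreal (Gamma a / (2 * (al/6) powr a))"
      by (rule gamma_type) (use a al in auto)
    also have "Gamma a / (2 * (al/6) powr a) = (6/al) powr a * Gamma a / 2"
      using al by (simp add: powr_divide field_simps)
    finally show ?thesis .
  qed
  have "(\<integral>\<^sup>+t. ennreal (F t) * indicator {0<..} t \<partial>lborel) \<le> ennreal (be/(be-1)) * ennreal ((6/al) powr a * Gamma a / 2)"
    using step3 step4 by (meson dual_order.trans mult_left_mono zero_le)
  thus ?thesis unfolding F_def a_def .
qed




lemma main1:
  fixes al be :: real assumes ab: "al > be - 1" and b1: "be - 1 > 0"
  shows "integrable lborel (\<lambda>t. \<bar>sin t\<bar> powr al / \<bar>t\<bar> powr be) \<and>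
     (6/al) powr ((al-be+1)/2) * Gamma ((al-be+1)/2) * phiAB al be \<le> sinInt al be \<and>
     sinInt al be \<le> (6/al) powr ((al-be+1)/2) * Gamma ((al-be+1)/2) * (1 + 1/(be-1))"
proof -
  have be: "be > 1" using b1 by simp
  have al: "al > 0" using ab be by simp
  define a where "a = (al-be+1)/2"
  have a: "a > 0" using ab by (simp add: a_def)
  define K where "K = (6/al) powr a * Gamma a"
  have K: "K > 0" using a al by (simp add: K_def Gamma_real_pos)
  define F where "F t = \<bar>sin t\<bar> powr al / \<bar>t\<bar> powr be" for t :: real
  have Fm[measurable]: "F \<in> borel_measurable borel" unfolding F_def by (rule F_meas)
  define N where "N = (\<integral>\<^sup>+t. ennreal (F t) \<partial>lborel)"
  define P where "P = (\<integral>\<^sup>+t. ennreal (F t) * indicator {0<..} t \<partial>lborel)"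
  have NP: "N = 2 * P" unfolding N_def P_def F_def by (rule nn_sym)
  have up: "N \<le> ennreal (K * (1 + 1/(be-1)))"
  proof -
    have "N \<le> 2 * (ennreal (be/(be-1)) * ennreal (K / 2))"
      unfolding NP P_def F_def K_def a_def by (intro mult_left_mono nn_upper al be ab) auto
    also have "\<dots> = ennreal (2 * (be/(be-1) * (K/2)))"
    proof -
      have e1: "ennreal (be/(be-1)) * ennreal (K/2) = ennreal (be/(be-1) * (K/2))"
        using K be by (intro ennreal_mult[symmetric]) auto
      have e2: "ennreal (2 * (be/(be-1) * (K/2))) = ennreal 2 * ennreal (be/(be-1) * (K/2))"
        by (rule ennreal_mult') simp
      show ?thesis unfolding e1 e2 by simp
    qed
    also have "2 * (be/(be-1) * (K/2)) = K * (1 + 1/(be-1))"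
      using be by (simp add: field_simps)
    finally show ?thesis .
  qed
  have Bp: "Beta a (al+1) \<ge> 0" using a al by (simp add: Beta_def Gamma_real_pos less_imp_le)
  have lo: "ennreal (6 powr a * Beta a (al+1)) \<le> N"
  proof -
    have "ennreal (6 powr a * Beta a (al+1)) = 2 * ennreal (6 powr a * Beta a (al+1) / 2)"
    proof -
      have "ennreal (2 * (6 powr a * Beta a (al+1) / 2)) = ennreal 2 * ennreal (6 powr a * Beta a (al+1) / 2)"
        by (rule ennreal_mult') simp
      thus ?thesis by simp
    qed
    also have "\<dots> \<le> 2 * P"
      unfolding P_def F_def a_def by (intro mult_left_mono nn_lower al be ab) auto
    finally show ?thesis using NP by simp
  qed
  have Nfin: "N < \<infinity>" using up by (simp add: le_less_trans)
  have int: "integrable lborel F"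
    by (rule integrableI_nonneg) (use Nfin in \<open>auto simp: N_def F_def\<close>)
  have SI: "sinInt al be = enn2real N"
  proof -
    have "sinInt al be = integral\<^sup>L lborel F" unfolding sinInt_def F_def by simp
    also have "\<dots> = enn2real N" unfolding N_def
      by (rule integral_eq_nn_integral) (auto simp: F_def)
    finally show ?thesis .
  qed
  obtain r where r: "N = ennreal r" "r \<ge> 0" using Nfin by (cases N) auto
  have SIr: "sinInt al be = r" using SI r by simp
  have phi: "K * phiAB al be = 6 powr a * Beta a (al+1)"
  proof -
    have "(6/al) powr a * al powr a = 6 powr a" using al by (simp add: powr_mult[symmetric])
    moreover have "Gamma (a + al + 1) = Gamma (a + (al + 1))" by (simp add: add.assoc)
    ultimately show ?thesis
      unfolding K_def phiAB_def Let_def a_def[symmetric] Beta_def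
      by (simp add: field_simps)
  qed
  have "sinInt al be \<le> K * (1 + 1/(be-1))"
    using up r K be by (simp add: SIr)
  moreover have "K * phiAB al be \<le> sinInt al be"
    using lo r by (simp add: SIr phi)
  ultimately show ?thesis using int unfolding K_def a_def F_def by simp
qed

theorem mainTheorem4:
  fixes \<alpha> \<beta> :: real
  shows "(\<alpha> > \<beta> - 1 \<and> \<beta> - 1 > 0 \<longrightarrow>
      (let a = (\<alpha> - \<beta> + 1) / 2 in
        integrable lborel (\<lambda>t. \<bar>sin t\<bar> powr \<alpha> / \<bar>t\<bar> powr \<beta>) \<and>
        (6 / \<alpha>) powr a * Gamma a * phiAB \<alpha> \<beta> \<le> sinInt \<alpha> \<beta> \<and>
        sinInt \<alpha> \<beta> \<le> (6 / \<alpha>) powr a * Gamma a * (1 + 1 / (\<beta> - 1))))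
   \<and> (\<alpha> > 1 \<longrightarrow>
        sqrt (6 / \<alpha>) * (sqrt \<alpha> * Gamma (\<alpha> + 1) / Gamma (\<alpha> + 3 / 2)) * sqrt pi
          \<le> sinInt \<alpha> \<alpha> \<and>
        sinInt \<alpha> \<alpha> \<le> sqrt (6 / \<alpha>) * sqrt pi * (1 + 1 / (\<alpha> - 1)))"
proof (intro conjI impI)
  assume "\<alpha> > \<beta> - 1 \<and> \<beta> - 1 > 0"
  then show "let a = (\<alpha> - \<beta> + 1) / 2 in
        integrable lborel (\<lambda>t. \<bar>sin t\<bar> powr \<alpha> / \<bar>t\<bar> powr \<beta>) \<and>
        (6 / \<alpha>) powr a * Gamma a * phiAB \<alpha> \<beta> \<le> sinInt \<alpha> \<beta> \<and>
        sinInt \<alpha> \<beta> \<le> (6 / \<alpha>) powr a * Gamma a * (1 + 1 / (\<beta> - 1))"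
    using main1[of \<beta> \<alpha>] by (simp add: Let_def)
next
  assume a1: "\<alpha> > 1"
  have M: "(6/\<alpha>) powr ((\<alpha>-\<alpha>+1)/2) * Gamma ((\<alpha>-\<alpha>+1)/2) * phiAB \<alpha> \<alpha> \<le> sinInt \<alpha> \<alpha> \<and>
     sinInt \<alpha> \<alpha> \<le> (6/\<alpha>) powr ((\<alpha>-\<alpha>+1)/2) * Gamma ((\<alpha>-\<alpha>+1)/2) * (1 + 1/(\<alpha>-1))"
    using main1[of \<alpha> \<alpha>] a1 by simp
  have h: "(\<alpha>-\<alpha>+1)/2 = (1/2::real)" by simp
  have s6: "(6/\<alpha>) powr (1/2) = sqrt (6/\<alpha>)" using a1 by (simp add: powr_half_sqrt)
  have phi: "phiAB \<alpha> \<alpha> = sqrt \<alpha> * Gamma (\<alpha> + 1) / Gamma (\<alpha> + 3 / 2)"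
  proof -
    have "phiAB \<alpha> \<alpha> = \<alpha> powr (1/2) * Gamma (\<alpha> + 1) / Gamma (1/2 + \<alpha> + 1)"
      by (simp add: phiAB_def Let_def)
    also have "1/2 + \<alpha> + 1 = \<alpha> + 3/2" by simp
    finally show ?thesis using a1 by (simp add: powr_half_sqrt)
  qed
  from M show "sqrt (6 / \<alpha>) * (sqrt \<alpha> * Gamma (\<alpha> + 1) / Gamma (\<alpha> + 3 / 2)) * sqrt pi \<le> sinInt \<alpha> \<alpha>"
    unfolding h s6 phi Gamma_one_half_real by (simp add: mult_ac)
  from M show "sinInt \<alpha> \<alpha> \<le> sqrt (6 / \<alpha>) * sqrt pi * (1 + 1 / (\<alpha> - 1))"
    unfolding h s6 phi Gamma_one_half_real by (simp add: mult_ac)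
qed


end
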